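(* Let $f:[-1,1]^n \to [-1,1]$ be a multilinear function and let $D$ be a distribution over $\mathbb{R}$ with mean $\mu$ and variance $\sigma^2 < 1-\mu^2$. Then for every nonnegative integer $d$ there exists a polynomial $f^{\le d}$ of degree at most $d$ such that $$\mathbb{E}_{x \sim D^{\otimes n}}\big[(f(x) - f^{\le d}(x))^2\big] \le \Big( \frac{\sigma^2}{1-\mu^2} \Big)^d .$$
   Context: A function on $[-1,1]^n$ is multilinear if it is a polynomial of degree at most one in each variable. $D^{\otimes n}$ is the product distribution with i.i.d. coordinates of law $D$. *)

theory Defs
  imports "HOL-Probability.Probability"
begin

text \<open>Points of R^n are represented as functions nat => real; only coordinates 0..n-1 matter.\<close>

definition multilinear :: "nat \<Rightarrow> ((nat \<Rightarrow> real) \<Rightarrow> real) \<Rightarrow> bool" where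
  "multilinear n f \<longleftrightarrow>
     (\<exists>c :: nat set \<Rightarrow> real. \<forall>x. f x = (\<Sum>S\<in>Pow {..<n}. c S * (\<Prod>i\<in>S. x i)))"

definition multi_indices :: "nat \<Rightarrow> nat \<Rightarrow> (nat \<Rightarrow> nat) set" where
  "multi_indices n d = {\<alpha>. (\<forall>i. n \<le> i \<longrightarrow> \<alpha> i = 0) \<and> sum \<alpha> {..<n} \<le> d}"

definition poly_deg_le :: "nat \<Rightarrow> nat \<Rightarrow> ((nat \<Rightarrow> real) \<Rightarrow> real) \<Rightarrow> bool" where
  "poly_deg_le n d p \<longleftrightarrow>
     (\<exists>c :: (nat \<Rightarrow> nat) \<Rightarrow> real.
        \<forall>x. p x = (\<Sum>\<alpha>\<in>multi_indices n d. c \<alpha> * (\<Prod>i<n. x i ^ \<alpha> i)))"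

end

theory Submission
  imports Defs
begin

definition chi :: "real \<Rightarrow> nat set \<Rightarrow> (nat \<Rightarrow> real) \<Rightarrow> real" where
  "chi m T x = (\<Prod>i\<in>T. (x i - m))"

lemma chi_prod:
  assumes "T \<subseteq> {..<n}" "U \<subseteq> {..<n}"
  shows "chi m T x * chi m U x =
    (\<Prod>i\<in>{..<n}. (\<lambda>i t. (if i \<in> T then t - m else 1) * (if i \<in> U then t - m else 1)) i (x i))"
proof -
  have fin: "finite {..<n}" by simp
  have 1: "(\<Prod>i\<in>{..<n}. (if i \<in> T then x i - m else 1)) = chi m T x"
    using assms(1) unfolding chi_def
    by (simp add: prod.If_cases Int_absorb1 Int_absorb2 Collect_mem_eq[of T]) 
  have 2: "(\<Prod>i\<in>{..<n}. (if i \<in> U then x i - m else 1)) = chi m U x"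
    using assms(2) unfolding chi_def
    by (simp add: prod.If_cases Int_absorb1 Int_absorb2 Collect_mem_eq[of U])
  show ?thesis using 1 2 by (simp add: prod.distrib)
qed

lemma chi_orth:
  fixes M :: "real measure"
  assumes P: "prob_space M" and sq: "integrable M (\<lambda>t. t^2)"
    and meas: "(\<lambda>t. t) \<in> borel_measurable M"
    and m: "m = (\<integral>t. t \<partial>M)" and v: "v = (\<integral>t. (t - m)^2 \<partial>M)"
    and T: "T \<subseteq> {..<n}" and U: "U \<subseteq> {..<n}"
  shows "integrable (PiM {..<n} (\<lambda>_. M)) (\<lambda>x. chi m T x * chi m U x)"
    "(\<integral>x. chi m T x * chi m U x \<partial>(PiM {..<n} (\<lambda>_. M))) = (if T = U then v ^ card T else 0)"
proof -
  interpret prob_space M by fact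
  interpret PP: product_prob_space "\<lambda>_. M" by unfold_locales
  have i1: "integrable M (\<lambda>t. t)"
    using square_integrable_imp_integrable[OF meas sq] .
  have i2: "integrable M (\<lambda>t. t - m)" using i1 by simp
  have i3: "integrable M (\<lambda>t. (t - m) * (t - m))"
  proof -
    have "(\<lambda>t. (t - m) * (t - m)) = (\<lambda>t. t^2 - 2 * m * t + m^2)"
      by (auto simp: power2_eq_square algebra_simps)
    then show ?thesis using sq i1 by simp
  qed
  define h where "h = (\<lambda>i t. (if i \<in> T then t - m else 1) * (if i \<in> U then t - m else (1::real)))"
  have ih: "integrable M (h i)" for i
    unfolding h_def using i2 i3 by (cases "i \<in> T"; cases "i \<in> U") auto
  have eq: "(\<lambda>x. chi m T x * chi m U x) = (\<lambda>x. \<Prod>i\<in>{..<n}. h i (x i))"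
    using chi_prod[OF T U] unfolding h_def by auto
  show "integrable (PiM {..<n} (\<lambda>_. M)) (\<lambda>x. chi m T x * chi m U x)"
    unfolding eq by (rule PP.product_integrable_prod) (auto intro: ih)
  have int_eq: "(\<integral>x. chi m T x * chi m U x \<partial>(PiM {..<n} (\<lambda>_. M))) = (\<Prod>i\<in>{..<n}. integral\<^sup>L M (h i))"
    unfolding eq by (rule PP.product_integral_prod) (auto intro: ih)
  have e0: "integral\<^sup>L M (\<lambda>t. t - m) = 0" using i1 m by (simp add: prob_space)
  have ev: "integral\<^sup>L M (\<lambda>t. (t - m) * (t - m)) = v" using v by (simp add: power2_eq_square)
  have hi: "integral\<^sup>L M (h i) = (if i \<in> T \<and> i \<in> U then v else if i \<in> T \<or> i \<in> U then 0 else 1)" for i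
    unfolding h_def using e0 ev by (cases "i \<in> T"; cases "i \<in> U") (auto simp: prob_space)
  show "(\<integral>x. chi m T x * chi m U x \<partial>(PiM {..<n} (\<lambda>_. M))) = (if T = U then v ^ card T else 0)"
  proof (cases "T = U")
    case True
    have "(\<Prod>i\<in>{..<n}. integral\<^sup>L M (h i)) = (\<Prod>i\<in>{..<n}. if i \<in> T then v else 1)"
      by (intro prod.cong) (auto simp: hi True)
    also have "\<dots> = v ^ card T"
      using T by (simp add: prod.If_cases Int_absorb1 Int_absorb2 Collect_mem_eq[of T])
    finally show ?thesis using int_eq True by simp
  next
    case False
    then obtain i where "i \<in> T \<and> i \<notin> U \<or> i \<in> U \<and> i \<notin> T" by blast
    then have "i \<in> {..<n}" "integral\<^sup>L M (h i) = 0" using T U hi by auto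
    then have "(\<Prod>i\<in>{..<n}. integral\<^sup>L M (h i)) = 0"
      by (intro prod_zero) auto
    then show ?thesis using int_eq False by simp
  qed
qed


lemma chi_sum_sq:
  fixes M :: "real measure"
  assumes P: "prob_space M" and sq: "integrable M (\<lambda>t. t^2)"
    and meas: "(\<lambda>t. t) \<in> borel_measurable M"
    and m: "m = (\<integral>t. t \<partial>M)" and v: "v = (\<integral>t. (t - m)^2 \<partial>M)"
  shows "integrable (PiM {..<n} (\<lambda>_. M)) (\<lambda>x. (\<Sum>T\<in>Pow {..<n}. a T * chi m T x)^2)"
    "(\<integral>x. (\<Sum>T\<in>Pow {..<n}. a T * chi m T x)^2 \<partial>(PiM {..<n} (\<lambda>_. M))) = (\<Sum>T\<in>Pow {..<n}. (a T)^2 * v ^ card T)"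
proof -
  let ?N = "PiM {..<n} (\<lambda>_. M)"
  have eq: "(\<lambda>x. (\<Sum>T\<in>Pow {..<n}. a T * chi m T x)^2) =
     (\<lambda>x. \<Sum>T\<in>Pow {..<n}. \<Sum>U\<in>Pow {..<n}. a T * a U * (chi m T x * chi m U x))"
    by (auto simp: power2_eq_square sum_product algebra_simps)
  have I: "integrable ?N (\<lambda>x. chi m T x * chi m U x)" if "T \<in> Pow {..<n}" "U \<in> Pow {..<n}" for T U
    using chi_orth(1)[OF assms] that by auto
  show "integrable ?N (\<lambda>x. (\<Sum>T\<in>Pow {..<n}. a T * chi m T x)^2)"
    unfolding eq
    by (intro Bochner_Integration.integrable_sum integrable_mult_right I) auto
  have "(\<integral>x. (\<Sum>T\<in>Pow {..<n}. a T * chi m T x)^2 \<partial>?N) =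
     (\<Sum>T\<in>Pow {..<n}. \<Sum>U\<in>Pow {..<n}. a T * a U * (\<integral>x. chi m T x * chi m U x \<partial>?N))"
    unfolding eq
    apply (subst Bochner_Integration.integral_sum)
     apply (intro Bochner_Integration.integrable_sum integrable_mult_right I; simp)
    apply (intro sum.cong refl)
    apply (subst Bochner_Integration.integral_sum)
     apply (intro integrable_mult_right I; simp)
    apply simp
    done
  also have "\<dots> = (\<Sum>T\<in>Pow {..<n}. \<Sum>U\<in>Pow {..<n}. if T = U then a T * a U * v ^ card T else 0)"
    by (intro sum.cong refl) (auto simp: chi_orth(2)[OF assms])
  also have "\<dots> = (\<Sum>T\<in>Pow {..<n}. (a T)^2 * v ^ card T)"
    by (simp add: power2_eq_square)
  finally show "(\<integral>x. (\<Sum>T\<in>Pow {..<n}. a T * chi m T x)^2 \<partial>?N) = (\<Sum>T\<in>Pow {..<n}. (a T)^2 * v ^ card T)" .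
qed


lemma poly_deg_le_zero: "poly_deg_le n d (\<lambda>x. 0)"
  unfolding poly_deg_le_def by (rule exI[of _ "\<lambda>_. 0"]) simp

lemma poly_deg_le_add:
  assumes "poly_deg_le n d p" "poly_deg_le n d q"
  shows "poly_deg_le n d (\<lambda>x. p x + q x)"
proof -
  obtain c1 where c1: "\<forall>x. p x = (\<Sum>\<alpha>\<in>multi_indices n d. c1 \<alpha> * (\<Prod>i<n. x i ^ \<alpha> i))"
    using assms(1) unfolding poly_deg_le_def by blast
  obtain c2 where c2: "\<forall>x. q x = (\<Sum>\<alpha>\<in>multi_indices n d. c2 \<alpha> * (\<Prod>i<n. x i ^ \<alpha> i))"
    using assms(2) unfolding poly_deg_le_def by blast
  show ?thesis unfolding poly_deg_le_def
    by (rule exI[of _ "\<lambda>\<alpha>. c1 \<alpha> + c2 \<alpha>"]) (simp add: c1 c2 sum.distrib algebra_simps)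
qed

lemma poly_deg_le_scale:
  assumes "poly_deg_le n d p"
  shows "poly_deg_le n d (\<lambda>x. a * p x)"
proof -
  obtain c1 where c1: "\<forall>x. p x = (\<Sum>\<alpha>\<in>multi_indices n d. c1 \<alpha> * (\<Prod>i<n. x i ^ \<alpha> i))"
    using assms(1) unfolding poly_deg_le_def by blast
  show ?thesis unfolding poly_deg_le_def
    by (rule exI[of _ "\<lambda>\<alpha>. a * c1 \<alpha>"]) (simp add: c1 sum_distrib_left algebra_simps)
qed

lemma poly_deg_le_sum:
  assumes "finite A" "\<And>T. T \<in> A \<Longrightarrow> poly_deg_le n d (F T)"
  shows "poly_deg_le n d (\<lambda>x. \<Sum>T\<in>A. F T x)"
  using assms
proof (induction A rule: finite_induct)
  case empty
  then show ?case using poly_deg_le_zero by simp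
next
  case (insert a A)
  then show ?case using poly_deg_le_add[of n d "F a" "\<lambda>x. \<Sum>T\<in>A. F T x"] by simp
qed

lemma finite_multi_indices: "finite (multi_indices n d)"
proof -
  have sub: "(\<lambda>\<alpha>. restrict \<alpha> {..<n}) ` multi_indices n d \<subseteq> PiE {..<n} (\<lambda>_. {..d})"
  proof
    fix \<gamma> assume "\<gamma> \<in> (\<lambda>\<alpha>. restrict \<alpha> {..<n}) ` multi_indices n d"
    then obtain \<alpha> where a: "\<alpha> \<in> multi_indices n d" and g: "\<gamma> = restrict \<alpha> {..<n}" by blast
    have "\<alpha> i \<le> d" if "i < n" for i
      using a member_le_sum[of i "{..<n}" \<alpha>] that unfolding multi_indices_def by auto
    then show "\<gamma> \<in> PiE {..<n} (\<lambda>_. {..d})" unfolding g by auto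
  qed
  have inj: "inj_on (\<lambda>\<alpha>. restrict \<alpha> {..<n}) (multi_indices n d)"
  proof (rule inj_onI)
    fix a b assume a: "a \<in> multi_indices n d" and b: "b \<in> multi_indices n d"
      and e: "restrict a {..<n} = restrict b {..<n}"
    show "a = b"
    proof
      fix i show "a i = b i"
      proof (cases "i < n")
        case True then show ?thesis using fun_cong[OF e, of i] by simp
      next
        case False then show ?thesis using a b unfolding multi_indices_def by auto
      qed
    qed
  qed
  have "finite ((\<lambda>\<alpha>. restrict \<alpha> {..<n}) ` multi_indices n d)"
    by (rule finite_subset[OF sub]) (simp add: finite_PiE)
  then show ?thesis using finite_imageD inj by blast
qed

lemma poly_deg_le_monom:
  assumes "U \<subseteq> {..<n}" "card U \<le> d"
  shows "poly_deg_le n d (\<lambda>x. \<Prod>i\<in>U. x i)"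
proof -
  define \<beta> where "\<beta> = (\<lambda>i. if i \<in> U then 1 else (0::nat))"
  have s: "sum \<beta> {..<n} = card U"
    unfolding \<beta>_def using assms(1)
    by (simp add: sum.If_cases Int_absorb1 Collect_mem_eq[of U])
  have mem: "\<beta> \<in> multi_indices n d"
    unfolding multi_indices_def using assms s by (auto simp: \<beta>_def)
  have pr: "(\<Prod>i<n. x i ^ \<beta> i) = (\<Prod>i\<in>U. x i)" for x
  proof -
    have "(\<Prod>i<n. x i ^ \<beta> i) = (\<Prod>i<n. if i \<in> U then x i else 1)"
      by (intro prod.cong) (auto simp: \<beta>_def)
    also have "\<dots> = (\<Prod>i\<in>U. x i)"
      using assms(1) by (simp add: prod.If_cases Int_absorb1 Collect_mem_eq[of U])
    finally show ?thesis .
  qed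
  show ?thesis unfolding poly_deg_le_def
  proof (rule exI[of _ "\<lambda>\<alpha>. if \<alpha> = \<beta> then 1 else 0"], intro allI)
    fix x :: "nat \<Rightarrow> real"
    have "(\<Sum>\<alpha>\<in>multi_indices n d. (if \<alpha> = \<beta> then 1 else 0) * (\<Prod>i<n. x i ^ \<alpha> i)) = (\<Prod>i<n. x i ^ \<beta> i)"
    proof -
      have "(\<Sum>\<alpha>\<in>multi_indices n d. (if \<alpha> = \<beta> then 1 else 0) * (\<Prod>i<n. x i ^ \<alpha> i))
          = (\<Sum>\<alpha>\<in>multi_indices n d. (if \<alpha> = \<beta> then (\<Prod>i<n. x i ^ \<alpha> i) else 0))"
        by (intro sum.cong) auto
      also have "\<dots> = (\<Prod>i<n. x i ^ \<beta> i)"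
        using mem finite_multi_indices by (simp add: sum.delta')
      finally show ?thesis .
    qed
    then show "(\<Prod>i\<in>U. x i) = (\<Sum>\<alpha>\<in>multi_indices n d. (if \<alpha> = \<beta> then 1 else 0) * (\<Prod>i<n. x i ^ \<alpha> i))"
      using pr[of x] by metis
  qed
qed

lemma prod_shift:
  fixes m :: real
  assumes "finite S"
  shows "(\<Prod>i\<in>S. x i) = (\<Sum>T\<in>Pow S. (\<Prod>i\<in>T. (x i - m)) * m ^ card (S - T))"
proof -
  have "(\<Prod>i\<in>S. x i) = (\<Prod>i\<in>S. (x i - m) + m)" by simp
  also have "\<dots> = (\<Sum>T\<in>Pow S. (\<Prod>i\<in>T. (x i - m)) * (\<Prod>i\<in>S - T. m))"
    by (rule prod_add) fact
  finally show ?thesis by simp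
qed

lemma prod_unshift:
  fixes m :: real
  assumes "finite S"
  shows "(\<Prod>i\<in>S. (x i - m)) = (\<Sum>U\<in>Pow S. (\<Prod>i\<in>U. x i) * (-m) ^ card (S - U))"
proof -
  have "(\<Prod>i\<in>S. (x i - m)) = (\<Prod>i\<in>S. x i + (-m))" by simp
  also have "\<dots> = (\<Sum>U\<in>Pow S. (\<Prod>i\<in>U. x i) * (\<Prod>i\<in>S - U. -m))"
    by (rule prod_add) fact
  finally show ?thesis by simp
qed

lemma poly_chi:
  assumes "T \<subseteq> {..<n}" "card T \<le> d"
  shows "poly_deg_le n d (chi m T)"
proof -
  have fin: "finite T" using assms(1) finite_subset by blast
  have eq: "chi m T = (\<lambda>x. \<Sum>U\<in>Pow T. (-m) ^ card (T - U) * (\<Prod>i\<in>U. x i))"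
    unfolding chi_def by (auto simp: prod_unshift[OF fin] mult.commute)
  show ?thesis unfolding eq
  proof (rule poly_deg_le_sum)
    show "finite (Pow T)" using fin by simp
    fix U assume "U \<in> Pow T"
    then have "U \<subseteq> {..<n}" "card U \<le> d"
      using assms fin card_mono[of T U] by auto
    then show "poly_deg_le n d (\<lambda>x. (-m) ^ card (T - U) * (\<Prod>i\<in>U. x i))"
      by (intro poly_deg_le_scale poly_deg_le_monom)
  qed
qed


lemma expand_chi:
  fixes m :: real
  shows "\<exists>g. \<forall>x. (\<Sum>S\<in>Pow {..<n}. c S * (\<Prod>i\<in>S. x i)) = (\<Sum>T\<in>Pow {..<n}. g T * chi m T x)"
proof (rule exI[of _ "\<lambda>T. \<Sum>S\<in>Pow {..<n}. if T \<subseteq> S then c S * m ^ card (S - T) else 0"], intro allI)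
  fix x :: "nat \<Rightarrow> real"
  have "(\<Sum>S\<in>Pow {..<n}. c S * (\<Prod>i\<in>S. x i)) =
     (\<Sum>S\<in>Pow {..<n}. \<Sum>T\<in>Pow {..<n}. if T \<subseteq> S then c S * m ^ card (S - T) * chi m T x else 0)"
  proof (intro sum.cong refl)
    fix S assume S: "S \<in> Pow {..<n}"
    then have fin: "finite S" using finite_subset by blast
    have "{T \<in> Pow {..<n}. T \<subseteq> S} = Pow S" using S by auto
    then have "(\<Sum>T\<in>Pow {..<n}. if T \<subseteq> S then c S * m ^ card (S - T) * chi m T x else 0)
        = (\<Sum>T\<in>Pow S. c S * m ^ card (S - T) * chi m T x)"
      using sum.inter_filter[of "Pow {..<n}" "\<lambda>T. c S * m ^ card (S - T) * chi m T x" "\<lambda>T. T \<subseteq> S"]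
      by simp
    also have "\<dots> = c S * (\<Prod>i\<in>S. x i)"
      unfolding prod_shift[OF fin, of x m] chi_def
      by (simp add: sum_distrib_left algebra_simps)
    finally show "c S * (\<Prod>i\<in>S. x i) =
       (\<Sum>T\<in>Pow {..<n}. if T \<subseteq> S then c S * m ^ card (S - T) * chi m T x else 0)" by simp
  qed
  also have "\<dots> = (\<Sum>T\<in>Pow {..<n}. \<Sum>S\<in>Pow {..<n}. if T \<subseteq> S then c S * m ^ card (S - T) * chi m T x else 0)"
    by (rule sum.swap)
  also have "\<dots> = (\<Sum>T\<in>Pow {..<n}. (\<Sum>S\<in>Pow {..<n}. if T \<subseteq> S then c S * m ^ card (S - T) else 0) * chi m T x)"
    by (simp add: sum_distrib_right, intro sum.cong refl, simp)
  finally show "(\<Sum>S\<in>Pow {..<n}. c S * (\<Prod>i\<in>S. x i)) =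
     (\<Sum>T\<in>Pow {..<n}. (\<Sum>S\<in>Pow {..<n}. if T \<subseteq> S then c S * m ^ card (S - T) else 0) * chi m T x)" .
qed


lemma bool_measure:
  fixes \<mu> :: real
  assumes "\<bar>\<mu>\<bar> < 1"
  defines "B \<equiv> measure_pmf (map_pmf (\<lambda>b. if b then 1 else -1 :: real) (bernoulli_pmf ((1 + \<mu>) / 2)))"
  shows "prob_space B" "integrable B (\<lambda>t. t^2)" "(\<lambda>t. t) \<in> borel_measurable B"
    "\<mu> = (\<integral>t. t \<partial>B)" "1 - \<mu>^2 = (\<integral>t. (t - \<mu>)^2 \<partial>B)"
    "AE t in B. \<bar>t\<bar> \<le> 1"
proof -
  have q: "0 \<le> (1 + \<mu>) / 2" "(1 + \<mu>) / 2 \<le> 1" using assms(1) by auto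
  show "prob_space B" unfolding B_def by (rule prob_space_measure_pmf)
  have fin: "finite (set_pmf (map_pmf (\<lambda>b. if b then 1 else -1 :: real) (bernoulli_pmf ((1 + \<mu>) / 2))))"
    by simp
  show "integrable B (\<lambda>t. t^2)" unfolding B_def by (rule integrable_measure_pmf_finite[OF fin])
  show "(\<lambda>t. t) \<in> borel_measurable B" unfolding B_def by simp
  show "\<mu> = (\<integral>t. t \<partial>B)" unfolding B_def using q by (simp add: field_simps)
  show "1 - \<mu>^2 = (\<integral>t. (t - \<mu>)^2 \<partial>B)" unfolding B_def using q
    by (simp add: field_simps power2_eq_square)
  show "AE t in B. \<bar>t\<bar> \<le> 1" unfolding B_def
    by (auto simp: AE_measure_pmf_iff)
qed


theorem mainTheorem4:
  fixes n d :: nat and f :: "(nat \<Rightarrow> real) \<Rightarrow> real"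
    and D :: "real measure" and \<mu> \<sigma> :: real
  assumes f_ml: "multilinear n f"
    and f_bdd: "\<And>x. (\<forall>i<n. \<bar>x i\<bar> \<le> 1) \<Longrightarrow> \<bar>f x\<bar> \<le> 1"
    and D_prob: "prob_space D"
    and D_borel: "sets D = sets borel"
    and D_sq: "integrable D (\<lambda>t. t ^ 2)"
    and D_mean: "\<mu> = (\<integral>t. t \<partial>D)"
    and D_var: "\<sigma> ^ 2 = (\<integral>t. (t - \<mu>) ^ 2 \<partial>D)"
    and var_lt: "\<sigma> ^ 2 < 1 - \<mu> ^ 2"
  shows "\<exists>p. poly_deg_le n d p \<and>
           integrable (PiM {..<n} (\<lambda>_. D)) (\<lambda>x. (f x - p x) ^ 2) \<and>
           (\<integral>x. (f x - p x) ^ 2 \<partial>(PiM {..<n} (\<lambda>_. D))) \<le> (\<sigma> ^ 2 / (1 - \<mu> ^ 2)) ^ d"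
proof -
  obtain c where c: "\<forall>x. f x = (\<Sum>S\<in>Pow {..<n}. c S * (\<Prod>i\<in>S. x i))"
    using f_ml unfolding multilinear_def by blast
  obtain g where g: "\<forall>x. (\<Sum>S\<in>Pow {..<n}. c S * (\<Prod>i\<in>S. x i)) = (\<Sum>T\<in>Pow {..<n}. g T * chi \<mu> T x)"
    using expand_chi by blast
  have fg: "f x = (\<Sum>T\<in>Pow {..<n}. g T * chi \<mu> T x)" for x using c g by simp
  have s0: "0 \<le> \<sigma>^2" by simp
  have v0: "0 < 1 - \<mu>^2" using var_lt s0 by linarith
  have mu1: "\<bar>\<mu>\<bar> < 1"
  proof -
    have "\<mu>^2 < 1^2" using v0 by simp
    then show ?thesis using power2_less_imp_less[of "\<bar>\<mu>\<bar>" 1] by simp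
  qed
  define a where "a T = (if card T \<le> d then 0 else g T)" for T
  define p where "p x = (\<Sum>T\<in>Pow {..<n}. (if card T \<le> d then g T else 0) * chi \<mu> T x)" for x
  have poly: "poly_deg_le n d p"
    unfolding p_def[abs_def]
  proof (rule poly_deg_le_sum)
    fix T assume T: "T \<in> Pow {..<n}"
    show "poly_deg_le n d (\<lambda>x. (if card T \<le> d then g T else 0) * chi \<mu> T x)"
    proof (cases "card T \<le> d")
      case True
      then show ?thesis using poly_deg_le_scale[OF poly_chi[of T n d \<mu>]] T by simp
    next
      case False
      then show ?thesis using poly_deg_le_zero by simp
    qed
  qed simp
  have diff: "f x - p x = (\<Sum>T\<in>Pow {..<n}. a T * chi \<mu> T x)" for x
    unfolding fg p_def a_def sum_subtractf[symmetric]
    by (intro sum.cong refl) (auto simp: algebra_simps)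
  have Dmeas: "(\<lambda>t. t) \<in> borel_measurable D"
    using measurable_ident_sets[OF D_borel] .
  note DD = chi_sum_sq[OF D_prob D_sq Dmeas D_mean D_var, of n a]
  have int: "integrable (PiM {..<n} (\<lambda>_. D)) (\<lambda>x. (f x - p x) ^ 2)"
    unfolding diff using DD(1) .
  have err: "(\<integral>x. (f x - p x) ^ 2 \<partial>(PiM {..<n} (\<lambda>_. D))) = (\<Sum>T\<in>Pow {..<n}. (a T)^2 * (\<sigma>^2) ^ card T)"
    unfolding diff using DD(2) .
  define B where "B = measure_pmf (map_pmf (\<lambda>b. if b then 1 else -1 :: real) (bernoulli_pmf ((1 + \<mu>) / 2)))"
  note BB = bool_measure[OF mu1, folded B_def]
  note BS = chi_sum_sq[OF BB(1-5), of n g]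
  have fB: "(\<lambda>x. (\<Sum>T\<in>Pow {..<n}. g T * chi \<mu> T x)^2) = (\<lambda>x. (f x)^2)"
    using fg by simp
  interpret PB: prob_space "PiM {..<n} (\<lambda>_. B)"
    by (rule prob_space_PiM) (use BB(1) in auto)
  have AEB: "AE x in PiM {..<n} (\<lambda>_. B). \<forall>i\<in>{..<n}. \<bar>x i\<bar> \<le> 1"
    by (intro eventually_ball_finite ballI AE_PiM_component BB(1) BB(6)) auto
  have AEf: "AE x in PiM {..<n} (\<lambda>_. B). (f x)^2 \<le> 1"
    using AEB
  proof eventually_elim
    case (elim x)
    then have "\<bar>f x\<bar> \<le> 1" using f_bdd by auto
    then have "\<bar>f x\<bar>^2 \<le> 1^2" by (intro power_mono) auto
    then show ?case by simp
  qed
  have sumB: "(\<Sum>T\<in>Pow {..<n}. (g T)^2 * (1 - \<mu>^2) ^ card T) \<le> 1"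
  proof -
    have "(\<Sum>T\<in>Pow {..<n}. (g T)^2 * (1 - \<mu>^2) ^ card T) = (\<integral>x. (f x)^2 \<partial>PiM {..<n} (\<lambda>_. B))"
      using BS(2) fB by simp
    also have "\<dots> \<le> (\<integral>x. 1 \<partial>PiM {..<n} (\<lambda>_. B))"
      using BS(1) fB AEf by (intro integral_mono_AE) auto
    also have "\<dots> = 1" by (simp add: PB.prob_space)
    finally show ?thesis .
  qed
  define r where "r = \<sigma>^2 / (1 - \<mu>^2)"
  have r0: "0 \<le> r" unfolding r_def using v0 s0 by simp
  have r1: "r \<le> 1" unfolding r_def using v0 var_lt by simp
  have trm: "(a T)^2 * (\<sigma>^2) ^ card T \<le> r ^ d * ((g T)^2 * (1 - \<mu>^2) ^ card T)" for T
  proof (cases "card T \<le> d")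
    case True
    then show ?thesis using r0 v0 by (simp add: a_def)
  next
    case False
    have "\<sigma>^2 = r * (1 - \<mu>^2)" using v0 by (simp add: r_def)
    then have "(\<sigma>^2) ^ card T = r ^ card T * (1 - \<mu>^2) ^ card T" by (simp add: power_mult_distrib)
    moreover have "r ^ card T \<le> r ^ d" using False r0 r1 by (intro power_decreasing) auto
    moreover have "0 \<le> (g T)^2 * (1 - \<mu>^2) ^ card T" using v0 by simp
    ultimately have "r ^ card T * ((g T)^2 * (1 - \<mu>^2) ^ card T) \<le> r ^ d * ((g T)^2 * (1 - \<mu>^2) ^ card T)"
      by (intro mult_right_mono) auto
    then show ?thesis using False \<open>(\<sigma>^2) ^ card T = _\<close>
      by (simp add: a_def algebra_simps)
  qed
  have "(\<integral>x. (f x - p x) ^ 2 \<partial>(PiM {..<n} (\<lambda>_. D))) \<le> (\<Sum>T\<in>Pow {..<n}. r ^ d * ((g T)^2 * (1 - \<mu>^2) ^ card T))"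
    unfolding err by (intro sum_mono trm)
  also have "\<dots> = r ^ d * (\<Sum>T\<in>Pow {..<n}. (g T)^2 * (1 - \<mu>^2) ^ card T)"
    by (simp add: sum_distrib_left)
  also have "\<dots> \<le> r ^ d" using sumB r0 by (simp add: mult_left_le)
  finally show ?thesis using poly int unfolding r_def by blast
qed

end
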